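(* Let $x\in(0,1)$ be irrational with OOCF expansion $((a_n,\varepsilon_n))_{n\ge1}$ and let $f(t)=\frac{1-t}{1+t}$. Define $\phi(k+1,-1)=(2k,-1)$ and $\phi(k,1)=(2k,1)$ for $k\ge1$. Then the EICF digits of $f(x)$ are $(b_n,\eta_n)=\phi(a_n,\varepsilon_n)$ for all $n\ge1$, and for all $n\ge1$ the $n$-th EICF convergent of $f(x)$ satisfies $p^E_n/q^E_n=f(p_n/q_n)$, where $p_n/q_n$ is the $n$-th OOCF principal convergent of $x$.
   Context: OOCF: digits $D=\{(1,1)\}\cup\{(a,\varepsilon):a\ge2,\ \varepsilon=\pm1\}$; $B(k+1,-1)=[\frac{k-1}{k},\frac{2k-1}{2k+1}]$, $B(k,1)=[\frac{2k-1}{2k+1},\frac{k}{k+1}]$ ($k\ge1$); $T(x)=\frac{kx-(k-1)}{k-(k+1)x}$ on $B(k+1,-1)$, $T(x)=\frac{k-(k+1)x}{kx-(k-1)}$ on $B(k,1)$, $T(1)=1$. The OOCF expansion of irrational $x\in(0,1)$ is the unique sequence $(a_n,\varepsilon_n)\in D$ with $T^{n-1}(x)\in B(a_n,\varepsilon_n)$ for all $n\ge1$; its $n$-th principal convergent is $p_n/q_n=1-\cfrac{1}{a_1+\cfrac{\varepsilon_1}{2-\cfrac{1}{\ddots\ \cfrac{\varepsilon_{n-1}}{2-\cfrac{1}{a_n+\varepsilon_n/2}}}}}$. EICF: $T_E:[0,1]\to[0,1]$, $T_E(y)=\frac1y-2k$ for $y\in[\frac1{2k+1},\frac1{2k}]$,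 $T_E(y)=2k-\frac1y$ for $y\in[\frac1{2k},\frac1{2k-1}]$ ($k\ge1$), $T_E(0)=0$. For irrational $y\in(0,1)$, its EICF digits are $(b_n,\eta_n)=(2k,1)$ if $T_E^{n-1}(y)\in[\frac1{2k+1},\frac1{2k}]$ and $(2k,-1)$ if $T_E^{n-1}(y)\in[\frac1{2k},\frac1{2k-1}]$; its $n$-th EICF convergent is $p^E_n/q^E_n=\cfrac{1}{b_1+\cfrac{\eta_1}{b_2+\cfrac{\eta_2}{\ddots+\cfrac{\eta_{n-1}}{b_n}}}}$. *)

theory Defs
  imports Complex_Main
begin

definition oocf_D :: "(nat \<times> int) set" where
  "oocf_D = {(1, 1)} \<union> {(a, e). a \<ge> 2 \<and> (e = 1 \<or> e = -1)}"

text \<open>B(k+1,-1) = [(k-1)/k, (2k-1)/(2k+1)], B(k,1) = [(2k-1)/(2k+1), k/(k+1)], k >= 1.\<close>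
definition oocf_B :: "nat \<times> int \<Rightarrow> real set" where
  "oocf_B d = (case d of (a, e) \<Rightarrow>
     if e = -1 \<and> a \<ge> 2 then
       {(real (a - 1) - 1) / real (a - 1) .. (2 * real (a - 1) - 1) / (2 * real (a - 1) + 1)}
     else if e = 1 \<and> a \<ge> 1 then
       {(2 * real a - 1) / (2 * real a + 1) .. real a / (real a + 1)}
     else {})"

definition oocf_T :: "real \<Rightarrow> real" where
  "oocf_T x =
     (if x = 1 then 1
      else if \<exists>k::nat. k \<ge> 1 \<and> x \<in> oocf_B (k + 1, -1) then
        (let k = real (SOME k::nat. k \<ge> 1 \<and> x \<in> oocf_B (k + 1, -1))
         in (k * x - (k - 1)) / (k - (k + 1) * x))
      else
        (let k = real (SOME k::nat. k \<ge> 1 \<and> x \<in> oocf_B (k, 1))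
         in (k - (k + 1) * x) / (k * x - (k - 1))))"

definition oocf_digit :: "real \<Rightarrow> nat \<Rightarrow> nat \<times> int" where
  "oocf_digit x n = (THE d. d \<in> oocf_D \<and> (oocf_T ^^ (n - 1)) x \<in> oocf_B d)"

fun oocf_tail :: "(nat \<times> int) list \<Rightarrow> real" where
  "oocf_tail [] = 0"
| "oocf_tail [(a, e)] = real a + real_of_int e / 2"
| "oocf_tail ((a, e) # ds) = real a + real_of_int e / (2 - 1 / oocf_tail ds)"

definition oocf_conv :: "real \<Rightarrow> nat \<Rightarrow> real" where
  "oocf_conv x n = 1 - 1 / oocf_tail (map (oocf_digit x) [1..<n + 1])"

definition eicf_D :: "(nat \<times> int) set" where
  "eicf_D = {(b, e). \<exists>k::nat. k \<ge> 1 \<and> b = 2 * k \<and> (e = 1 \<or> e = -1)}"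

definition eicf_B :: "nat \<times> int \<Rightarrow> real set" where
  "eicf_B d = (case d of (b, e) \<Rightarrow>
     if e = 1 then {1 / (real b + 1) .. 1 / real b}
     else {1 / real b .. 1 / (real b - 1)})"

definition eicf_T :: "real \<Rightarrow> real" where
  "eicf_T y =
     (if y = 0 then 0
      else if \<exists>k::nat. k \<ge> 1 \<and> y \<in> {1 / (2 * real k + 1) .. 1 / (2 * real k)} then
        (let k = real (SOME k::nat. k \<ge> 1 \<and> y \<in> {1 / (2 * real k + 1) .. 1 / (2 * real k)})
         in 1 / y - 2 * k)
      else
        (let k = real (SOME k::nat. k \<ge> 1 \<and> y \<in> {1 / (2 * real k) .. 1 / (2 * real k - 1)})
         in 2 * k - 1 / y))"

definition eicf_digit :: "real \<Rightarrow> nat \<Rightarrow> nat \<times> int" where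
  "eicf_digit y n = (THE d. d \<in> eicf_D \<and> (eicf_T ^^ (n - 1)) y \<in> eicf_B d)"

fun eicf_tail :: "(nat \<times> int) list \<Rightarrow> real" where
  "eicf_tail [] = 0"
| "eicf_tail [(b, e)] = real b"
| "eicf_tail ((b, e) # ds) = real b + real_of_int e / eicf_tail ds"

definition eicf_conv :: "real \<Rightarrow> nat \<Rightarrow> real" where
  "eicf_conv y n = 1 / eicf_tail (map (eicf_digit y) [1..<n + 1])"

definition digit_phi :: "nat \<times> int \<Rightarrow> nat \<times> int" where
  "digit_phi d = (case d of (a, e) \<Rightarrow> if e = -1 then (2 * (a - 1), -1) else (2 * a, 1))"

definition cayley_f :: "real \<Rightarrow> real" where
  "cayley_f t = (1 - t) / (1 + t)"

end

theory Submission
  imports Defs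
begin


definition W :: "real \<Rightarrow> real" where "W z = (1+z)/(1-z)"
definition M :: "real \<Rightarrow> nat" where "M z = nat \<lfloor>W z\<rfloor>"

lemma W_gt1: "0<z \<Longrightarrow> z<1 \<Longrightarrow> W z > 1"
  unfolding W_def by (simp add: divide_simps)

lemma z_from_W: "z<1 \<Longrightarrow> z = (W z - 1)/(W z + 1)"
  unfolding W_def by (simp add: field_simps)

lemma W_irrat: assumes "0<z" "z<1" "z \<notin> \<rat>" shows "W z \<notin> \<rat>"
proof
  assume "W z \<in> \<rat>"
  hence "(W z - 1)/(W z + 1) \<in> \<rat>" by (intro Rats_divide Rats_diff Rats_add) auto
  with z_from_W[OF assms(2)] assms(3) show False by simp
qed

lemma floor_char: assumes "w \<notin> \<rat>" "w > 0"
  shows "(real c \<le> w \<and> w \<le> real c + 1) \<longleftrightarrow> nat \<lfloor>w\<rfloor> = c"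
proof
  assume h: "real c \<le> w \<and> w \<le> real c + 1"
  have "w \<noteq> real c + 1" using assms(1) by (metis Rats_add Rats_of_nat Rats_1)
  with h have "real c \<le> w" "w < real c + 1" by auto
  hence "\<lfloor>w\<rfloor> = int c" by (simp add: floor_eq_iff)
  thus "nat \<lfloor>w\<rfloor> = c" by simp
next
  assume h: "nat \<lfloor>w\<rfloor> = c"
  have f0: "\<lfloor>w\<rfloor> \<ge> 0" using assms(2) by simp
  have "\<lfloor>w\<rfloor> = int c" using h nat_0_le[OF f0] by simp
  thus "real c \<le> w \<and> w \<le> real c + 1" by (simp add: floor_eq_iff)
qed

lemma memB_pos: assumes "1 \<le> a" "0<z" "z<1"
  shows "z \<in> oocf_B (a,1) \<longleftrightarrow> (2*real a \<le> W z \<and> W z \<le> 2*real a + 1)"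
proof -
  have a: "real a \<ge> 1" using assms by simp
  have "z \<in> oocf_B (a,1) \<longleftrightarrow> (2 * real a - 1) / (2 * real a + 1) \<le> z \<and> z \<le> real a / (real a + 1)"
    using assms by (simp add: oocf_B_def)
  also have "\<dots> \<longleftrightarrow> 2 * real a - 1 \<le> z * (2 * real a + 1) \<and> z * (real a + 1) \<le> real a"
    using a by (simp add: divide_le_eq le_divide_eq)
  also have "\<dots> \<longleftrightarrow> 2*real a * (1-z) \<le> 1+z \<and> 1 + z \<le> (2*real a + 1) * (1-z)"
  proof -
    have e: "z*(2*real a+1) = 2*(z*real a) + z" "z*(real a+1) = z*real a + z"
      "2*real a*(1-z) = 2*real a - 2*(z*real a)" "(2*real a+1)*(1-z) = 2*real a + 1 - 2*(z*real a) - z"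
      by (simp_all add: algebra_simps)
    show ?thesis unfolding e by arith
  qed
  also have "\<dots> \<longleftrightarrow> (2*real a \<le> W z \<and> W z \<le> 2*real a + 1)"
    using assms unfolding W_def by (simp add: divide_le_eq le_divide_eq)
  finally show ?thesis .
qed

lemma memB_neg: assumes "2 \<le> a" "0<z" "z<1"
  shows "z \<in> oocf_B (a,-1) \<longleftrightarrow> (2*real a - 3 \<le> W z \<and> W z \<le> 2*real a - 2)"
proof -
  have a: "real a \<ge> 2" "real (a-1) = real a - 1" using assms by auto
  have "z \<in> oocf_B (a,-1) \<longleftrightarrow> (real a - 2) / (real a - 1) \<le> z \<and> z \<le> (2 * real a - 3) / (2 * real a - 1)"
    using assms a by (simp add: oocf_B_def algebra_simps)
  also have "\<dots> \<longleftrightarrow> real a - 2 \<le> z * (real a - 1) \<and> z * (2 * real a - 1) \<le> 2 * real a - 3"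
    using a by (simp add: divide_le_eq le_divide_eq)
  also have "\<dots> \<longleftrightarrow> (2*real a - 3) * (1-z) \<le> 1+z \<and> 1 + z \<le> (2*real a - 2) * (1-z)"
  proof -
    have e: "z*(real a - 1) = z*real a - z" "z*(2*real a-1) = 2*(z*real a) - z"
      "(2*real a - 3)*(1-z) = 2*real a - 3 - 2*(z*real a) + 3*z" "(2*real a-2)*(1-z) = 2*real a - 2 - 2*(z*real a) + 2*z"
      by (simp_all add: algebra_simps)
    show ?thesis unfolding e by arith
  qed
  also have "\<dots> \<longleftrightarrow> (2*real a - 3 \<le> W z \<and> W z \<le> 2*real a - 2)"
    using assms unfolding W_def by (simp add: divide_le_eq le_divide_eq)
  finally show ?thesis .
qed


definition dig :: "real \<Rightarrow> nat \<times> int" where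
  "dig z = (if even (M z) then (M z div 2, 1) else ((M z + 3) div 2, -1))"
definition edig :: "real \<Rightarrow> nat \<times> int" where
  "edig z = (if even (M z) then (M z, 1) else (M z + 1, -1))"

lemma M_basic: assumes "0<z" "z<1" "z \<notin> \<rat>"
  shows "M z \<ge> 1" "real (M z) < W z" "W z < real (M z) + 1"
proof -
  have w1: "W z > 1" by (rule W_gt1[OF assms(1,2)])
  have wi: "W z \<notin> \<rat>" by (rule W_irrat[OF assms])
  have "\<lfloor>W z\<rfloor> \<ge> 1" using w1 by simp
  hence "nat 1 \<le> nat \<lfloor>W z\<rfloor>" by (rule nat_mono)
  thus "M z \<ge> 1" unfolding M_def by simp
  have b: "real (M z) \<le> W z \<and> W z \<le> real (M z) + 1"
    using floor_char[OF wi, of "M z"] w1 unfolding M_def by simp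
  have "W z \<noteq> real (M z)" "W z \<noteq> real (M z) + 1" using wi
    by (metis Rats_of_nat, metis Rats_add Rats_of_nat Rats_1)
  with b show "real (M z) < W z" "W z < real (M z) + 1" by auto
qed

lemma M_char: assumes "0<z" "z<1" "z \<notin> \<rat>"
  shows "(real c \<le> W z \<and> W z \<le> real c + 1) \<longleftrightarrow> M z = c"
  unfolding M_def using floor_char[OF W_irrat[OF assms]] W_gt1[OF assms(1,2)] by simp

lemma memB_pos': assumes "1 \<le> a" "0<z" "z<1" "z \<notin> \<rat>"
  shows "z \<in> oocf_B (a,1) \<longleftrightarrow> M z = 2*a"
  using memB_pos[OF assms(1-3)] M_char[OF assms(2-4), of "2*a"] by simp

lemma memB_neg': assumes "2 \<le> a" "0<z" "z<1" "z \<notin> \<rat>"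
  shows "z \<in> oocf_B (a,-1) \<longleftrightarrow> M z = 2*a - 3"
proof -
  have "real (2*a-3) = 2*real a - 3" using assms(1) by (simp add: of_nat_diff)
  thus ?thesis using memB_neg[OF assms(1-3)] M_char[OF assms(2-4), of "2*a-3"] by simp
qed

lemma digA: assumes "0<z" "z<1" "z \<notin> \<rat>"
  shows "(d \<in> oocf_D \<and> z \<in> oocf_B d) \<longleftrightarrow> d = dig z"
proof (cases d)
  case (Pair a e)
  have m1: "M z \<ge> 1" using M_basic[OF assms] by simp
  show ?thesis
  proof
    assume h: "d \<in> oocf_D \<and> z \<in> oocf_B d"
    hence D: "(a = 1 \<and> e = 1) \<or> (a \<ge> 2 \<and> (e = 1 \<or> e = -1))" using Pair by (auto simp: oocf_D_def)
    show "d = dig z"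
    proof (cases "e = 1")
      case True
      hence "a \<ge> 1" using D by auto
      hence "M z = 2*a" using memB_pos'[OF _ assms] h Pair True by auto
      thus ?thesis using Pair True by (simp add: dig_def)
    next
      case False
      hence e: "e = -1" "a \<ge> 2" using D by auto
      hence "M z = 2*a - 3" using memB_neg'[OF _ assms] h Pair by auto
      thus ?thesis using Pair e by (simp add: dig_def)
    qed
  next
    assume h: "d = dig z"
    show "d \<in> oocf_D \<and> z \<in> oocf_B d"
    proof (cases "even (M z)")
      case True
      hence a: "a = M z div 2" "e = 1" using h Pair by (auto simp: dig_def)
      have a1: "a \<ge> 1" "M z = 2*a" using a True m1 by auto
      have "d \<in> oocf_D" using a(2) a1 Pair by (auto simp: oocf_D_def)
      moreover have "z \<in> oocf_B d" using memB_pos'[OF a1(1) assms] a1(2) a(2) Pair by simp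
      ultimately show ?thesis by simp
    next
      case False
      hence a: "a = (M z + 3) div 2" "e = -1" using h Pair by (auto simp: dig_def)
      obtain j where j: "M z = 2*j+1" using False oddE by blast
      have "a = j + 2" using a(1) j by simp
      hence a1: "a \<ge> 2" "M z = 2*a - 3" using j by auto
      have "d \<in> oocf_D" using a(2) a1 Pair by (auto simp: oocf_D_def)
      moreover have "z \<in> oocf_B d" using memB_neg'[OF a1(1) assms] a1(2) a(2) Pair by simp
      ultimately show ?thesis by simp
    qed
  qed
qed

lemma inv_iv1: assumes "0<w" "1 \<le> k"
  shows "1/w \<in> {1/(2*real k+1) .. 1/(2*real k)} \<longleftrightarrow> (2*real k \<le> w \<and> w \<le> 2*real k + 1)"
  using assms by (auto simp: divide_simps)

lemma inv_iv2: assumes "0<w" "1 \<le> k"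
  shows "1/w \<in> {1/(2*real k) .. 1/(2*real k - 1)} \<longleftrightarrow> (2*real k - 1 \<le> w \<and> w \<le> 2*real k)"
proof -
  have "2*real k - 1 > 0" using assms by simp
  thus ?thesis using assms by (auto simp: divide_simps)
qed

lemma f_W: "0<z \<Longrightarrow> z<1 \<Longrightarrow> cayley_f z = 1 / W z"
  unfolding cayley_f_def W_def by simp

lemma M_char_even: assumes "0<z" "z<1" "z \<notin> \<rat>" "1 \<le> k"
  shows "1 / W z \<in> {1/(2*real k+1) .. 1/(2*real k)} \<longleftrightarrow> M z = 2*k"
  using inv_iv1[OF _ assms(4), of "W z"] W_gt1[OF assms(1,2)] M_char[OF assms(1-3), of "2*k"] by simp

lemma M_char_odd: assumes "0<z" "z<1" "z \<notin> \<rat>" "1 \<le> k"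
  shows "1 / W z \<in> {1/(2*real k) .. 1/(2*real k - 1)} \<longleftrightarrow> M z = 2*k - 1"
proof -
  have "real (2*k-1) = 2*real k - 1" using assms(4) by (simp add: of_nat_diff)
  thus ?thesis using inv_iv2[OF _ assms(4), of "W z"] W_gt1[OF assms(1,2)] M_char[OF assms(1-3), of "2*k-1"] by simp
qed

lemma digB: assumes "0<z" "z<1" "z \<notin> \<rat>"
  shows "(d \<in> eicf_D \<and> cayley_f z \<in> eicf_B d) \<longleftrightarrow> d = edig z"
proof (cases d)
  case (Pair b e)
  have m1: "M z \<ge> 1" using M_basic[OF assms] by simp
  have fz: "cayley_f z = 1 / W z" using f_W assms by simp
  show ?thesis
  proof
    assume h: "d \<in> eicf_D \<and> cayley_f z \<in> eicf_B d"
    then obtain k where k: "k \<ge> 1" "b = 2*k" "e = 1 \<or> e = -1" using Pair by (auto simp: eicf_D_def)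
    show "d = edig z"
    proof (cases "e = 1")
      case True
      hence "1 / W z \<in> {1/(2*real k+1) .. 1/(2*real k)}" using h Pair k fz by (simp add: eicf_B_def)
      hence "M z = 2*k" using M_char_even[OF assms k(1)] by simp
      thus ?thesis using Pair True k by (simp add: edig_def)
    next
      case False
      hence e: "e = -1" using k by auto
      hence "1 / W z \<in> {1/(2*real k) .. 1/(2*real k - 1)}" using h Pair k fz by (simp add: eicf_B_def)
      hence "M z = 2*k - 1" using M_char_odd[OF assms k(1)] by simp
      thus ?thesis using Pair e k by (simp add: edig_def)
    qed
  next
    assume h: "d = edig z"
    show "d \<in> eicf_D \<and> cayley_f z \<in> eicf_B d"
    proof (cases "even (M z)")
      case True
      hence a: "b = M z" "e = 1" using h Pair by (auto simp: edig_def)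
      define k where "k = M z div 2"
      have k: "k \<ge> 1" "M z = 2*k" using True m1 unfolding k_def by auto
      have "d \<in> eicf_D" using a k Pair by (auto simp: eicf_D_def)
      moreover have "1 / W z \<in> {1/(2*real k+1) .. 1/(2*real k)}" using M_char_even[OF assms k(1)] k by simp
      hence "cayley_f z \<in> eicf_B d" using a k Pair fz by (simp add: eicf_B_def)
      ultimately show ?thesis by simp
    next
      case False
      hence a: "b = M z + 1" "e = -1" using h Pair by (auto simp: edig_def)
      define k where "k = (M z + 1) div 2"
      obtain j where j: "M z = 2*j+1" using False oddE by blast
      have "k = j + 1" using j unfolding k_def by simp
      hence k: "k \<ge> 1" "M z = 2*k - 1" "b = 2*k" using j a by auto
      have "d \<in> eicf_D" using a k Pair by (auto simp: eicf_D_def)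
      moreover have "1 / W z \<in> {1/(2*real k) .. 1/(2*real k - 1)}" using M_char_odd[OF assms k(1)] k by simp
      hence "cayley_f z \<in> eicf_B d" using a k Pair fz by (simp add: eicf_B_def)
      ultimately show ?thesis by simp
    qed
  qed
qed

lemma phi_dig: "digit_phi (dig z) = edig z"
proof (cases "even (M z)")
  case True thus ?thesis unfolding digit_phi_def dig_def edig_def by simp
next
  case False
  obtain j where j: "M z = 2*j+1" using False oddE by blast
  hence "2 * ((M z + 3) div 2 - 1) = M z + 1" by simp
  thus ?thesis using False unfolding digit_phi_def dig_def edig_def by simp
qed



lemma frac_cancel: "c \<noteq> 0 \<Longrightarrow> (2*a/c)/(2*b/c) = (a::real)/b"
  by (cases "b=0") (simp_all add: field_simps)

lemma alg1: assumes "z<1" "k*z-(k-1) \<noteq> 0"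
  shows "(k-(k+1)*z)/(k*z-(k-1)) = cayley_f ((1+z)/(1-z) - 2*k)"
proof -
  have nz: "1 - z \<noteq> 0" using assms by simp
  have p: "1 + ((1+z)/(1-z) - 2*k) = 2*(k*z-(k-1))/(1-z)" using nz by (simp add: field_simps)
  have m: "1 - ((1+z)/(1-z) - 2*k) = 2*(k-(k+1)*z)/(1-z)" using nz by (simp add: field_simps)
  have "cayley_f ((1+z)/(1-z) - 2*k) = (1 - ((1+z)/(1-z) - 2*k)) / (1 + ((1+z)/(1-z) - 2*k))" by (simp only: cayley_f_def)
  also have "\<dots> = (2*(k-(k+1)*z)/(1-z)) / (2*(k*z-(k-1))/(1-z))" by (simp only: p m)
  also have "\<dots> = (k-(k+1)*z)/(k*z-(k-1))" using nz by (rule frac_cancel)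
  finally show ?thesis by simp
qed

lemma alg2: assumes "z<1" "k-(k+1)*z \<noteq> 0"
  shows "(k*z-(k-1))/(k-(k+1)*z) = cayley_f (2*k - (1+z)/(1-z))"
proof -
  have nz: "1 - z \<noteq> 0" using assms by simp
  have p: "1 + (2*k - (1+z)/(1-z)) = 2*(k-(k+1)*z)/(1-z)" using nz by (simp add: field_simps)
  have m: "1 - (2*k - (1+z)/(1-z)) = 2*(k*z-(k-1))/(1-z)" using nz by (simp add: field_simps)
  have "cayley_f (2*k - (1+z)/(1-z)) = (1 - (2*k - (1+z)/(1-z))) / (1 + (2*k - (1+z)/(1-z)))" by (simp only: cayley_f_def)
  also have "\<dots> = (2*(k*z-(k-1))/(1-z)) / (2*(k-(k+1)*z)/(1-z))" by (simp only: p m)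
  also have "\<dots> = (k*z-(k-1))/(k-(k+1)*z)" using nz by (rule frac_cancel)
  finally show ?thesis by simp
qed

lemma T_val: assumes z: "0<z" "z<1" "z\<notin>\<rat>"
  defines "v \<equiv> (if even (M z) then W z - real (M z) else real (M z) + 1 - W z)"
  shows "0 < v" "v < 1" "v \<notin> \<rat>" "oocf_T z = cayley_f v" "eicf_T (cayley_f z) = v"
proof -
  note mb = M_basic[OF z]
  show "0 < v" "v < 1" using mb unfolding v_def by auto
  show "v \<notin> \<rat>"
  proof
    assume "v \<in> \<rat>"
    moreover have "W z = (if even (M z) then v + real (M z) else real (M z) + 1 - v)" unfolding v_def by simp
    ultimately have "W z \<in> \<rat>" by (simp add: Rats_add Rats_diff)
    thus False using W_irrat[OF z] by simp
  qed
  have fz: "cayley_f z = 1 / W z" using f_W z by simp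
  have W0: "W z > 0" using W_gt1[OF z(1,2)] by simp
  have kq: "\<And>k::nat. k \<ge> 1 \<Longrightarrow> real k * z - (real k - 1) \<noteq> 0 \<and> real k - (real k + 1) * z \<noteq> 0"
  proof
    fix k :: nat assume k: "k \<ge> 1"
    show "real k * z - (real k - 1) \<noteq> 0"
    proof
      assume "real k * z - (real k - 1) = 0"
      hence "z = (real k - 1) / real k" using k by (simp add: field_simps)
      hence "z \<in> \<rat>" by simp
      thus False using z by simp
    qed
    show "real k - (real k + 1) * z \<noteq> 0"
    proof
      assume "real k - (real k + 1) * z = 0"
      hence "z = real k / (real k + 1)" by (simp add: field_simps)
      hence "z \<in> \<rat>" by simp
      thus False using z by simp
    qed
  qed
  show "oocf_T z = cayley_f v" "eicf_T (cayley_f z) = v"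
  proof -
    have "oocf_T z = cayley_f v \<and> eicf_T (cayley_f z) = v"
    proof (cases "even (M z)")
      case True
      define k where "k = M z div 2"
      have k: "k \<ge> 1" "M z = 2*k" using True mb(1) unfolding k_def by auto
      have v: "v = W z - 2 * real k" using True k unfolding v_def by simp
      have n1: "\<not> (\<exists>k'::nat. k' \<ge> 1 \<and> z \<in> oocf_B (k' + 1, -1))"
      proof
        assume "\<exists>k'::nat. k' \<ge> 1 \<and> z \<in> oocf_B (k' + 1, -1)"
        then obtain k' :: nat where "k' \<ge> 1" "z \<in> oocf_B (k' + 1, -1)" by blast
        hence "M z = 2*(k'+1) - 3" using memB_neg'[OF _ z, of "k'+1"] by simp
        thus False using k by presburger
      qed
      have s1: "(SOME k'::nat. k' \<ge> 1 \<and> z \<in> oocf_B (k', 1)) = k"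
      proof (rule some_equality)
        show "k \<ge> 1 \<and> z \<in> oocf_B (k, 1)" using memB_pos'[OF k(1) z] k by simp
      next
        fix k' :: nat assume "k' \<ge> 1 \<and> z \<in> oocf_B (k', 1)"
        thus "k' = k" using memB_pos'[OF _ z, of k'] k by simp
      qed
      have "oocf_T z = (real k - (real k + 1) * z) / (real k * z - (real k - 1))"
      proof -
        have "z \<noteq> 1" using z by simp
        thus ?thesis unfolding oocf_T_def by (simp only: if_not_P[OF n1] if_False s1 Let_def)
      qed
      also have "\<dots> = cayley_f v" unfolding v W_def by (rule alg1) (use z kq[OF k(1)] in auto)
      finally have 1: "oocf_T z = cayley_f v" .
      have e1: "1 / W z \<in> {1/(2*real k+1) .. 1/(2*real k)}" using M_char_even[OF z k(1)] k by simp
      have s2: "(SOME k'::nat. k' \<ge> 1 \<and> 1 / W z \<in> {1/(2*real k'+1) .. 1/(2*real k')}) = k"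
      proof (rule some_equality)
        show "k \<ge> 1 \<and> 1 / W z \<in> {1/(2*real k+1) .. 1/(2*real k)}" using e1 k by simp
      next
        fix k' :: nat assume "k' \<ge> 1 \<and> 1 / W z \<in> {1/(2*real k'+1) .. 1/(2*real k')}"
        thus "k' = k" using M_char_even[OF z, of k'] k by auto
      qed
      have "eicf_T (cayley_f z) = 1 / (1 / W z) - 2 * real k"
        unfolding eicf_T_def fz using W0 e1 k(1) s2 by (auto simp: Let_def)
      also have "\<dots> = v" using v by simp
      finally show ?thesis using 1 by simp
    next
      case False
      define k where "k = (M z + 1) div 2"
      obtain j where j: "M z = 2*j+1" using False oddE by blast
      have "k = j + 1" using j unfolding k_def by simp
      hence k: "k \<ge> 1" "M z = 2*k - 1" using j by auto
      have v: "v = 2 * real k - W z" using False k unfolding v_def by (simp add: of_nat_diff)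
      have b1: "z \<in> oocf_B (k + 1, -1)" using memB_neg'[OF _ z, of "k+1"] k by simp
      have s1: "(SOME k'::nat. k' \<ge> 1 \<and> z \<in> oocf_B (k' + 1, -1)) = k"
      proof (rule some_equality)
        show "k \<ge> 1 \<and> z \<in> oocf_B (k + 1, -1)" using b1 k by simp
      next
        fix k' :: nat assume "k' \<ge> 1 \<and> z \<in> oocf_B (k' + 1, -1)"
        thus "k' = k" using memB_neg'[OF _ z, of "k'+1"] k by simp
      qed
      have "oocf_T z = (real k * z - (real k - 1)) / (real k - (real k + 1) * z)"
        unfolding oocf_T_def using z b1 k(1) s1 by (auto simp: Let_def)
      also have "\<dots> = cayley_f v" unfolding v W_def by (rule alg2) (use z kq[OF k(1)] in auto)
      finally have 1: "oocf_T z = cayley_f v" .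
      have n1: "\<not> (\<exists>k'::nat. k' \<ge> 1 \<and> 1 / W z \<in> {1/(2*real k'+1) .. 1/(2*real k')})"
      proof
        assume "\<exists>k'::nat. k' \<ge> 1 \<and> 1 / W z \<in> {1/(2*real k'+1) .. 1/(2*real k')}"
        then obtain k' :: nat where "k' \<ge> 1" "1 / W z \<in> {1/(2*real k'+1) .. 1/(2*real k')}" by blast
        hence "M z = 2*k'" using M_char_even[OF z, of k'] by simp
        thus False using False by simp
      qed
      have e1: "1 / W z \<in> {1/(2*real k) .. 1/(2*real k - 1)}" using M_char_odd[OF z k(1)] k by simp
      have s2: "(SOME k'::nat. k' \<ge> 1 \<and> 1 / W z \<in> {1/(2*real k') .. 1/(2*real k' - 1)}) = k"
      proof (rule some_equality)
        show "k \<ge> 1 \<and> 1 / W z \<in> {1/(2*real k) .. 1/(2*real k - 1)}" using e1 k by simp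
      next
        fix k' :: nat assume "k' \<ge> 1 \<and> 1 / W z \<in> {1/(2*real k') .. 1/(2*real k' - 1)}"
        hence "M z = 2*k' - 1" using M_char_odd[OF z, of k'] by simp
        thus "k' = k" using k by simp
      qed
      have "eicf_T (cayley_f z) = 2 * real k - 1 / (1 / W z)"
      proof -
        have "1 / W z \<noteq> 0" using W0 by simp
        thus ?thesis unfolding eicf_T_def fz by (simp only: if_not_P[OF n1] if_False s2 Let_def)
      qed
      also have "\<dots> = v" using v by simp
      finally show ?thesis using 1 by simp
    qed
    thus "oocf_T z = cayley_f v" "eicf_T (cayley_f z) = v" by auto
  qed
qed



lemma ff: "v \<noteq> -1 \<Longrightarrow> cayley_f (cayley_f v) = v"
proof -
  assume h: "v \<noteq> -1"
  hence n: "1 + v \<noteq> 0" by (metis add.commute add_eq_0_iff2)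
  have "cayley_f (cayley_f v) = (1 - (1-v)/(1+v)) / (1 + (1-v)/(1+v))" unfolding cayley_f_def ..
  also have "1 - (1-v)/(1+v) = 2*v/(1+v)" using n by (simp add: field_simps)
  also have "1 + (1-v)/(1+v) = 2/(1+v)" using n by (simp add: field_simps)
  also have "(2*v/(1+v)) / (2/(1+v)) = v" using n by simp
  finally show ?thesis .
qed

lemma f_rat: "q \<in> \<rat> \<Longrightarrow> cayley_f q \<in> \<rat>"
  unfolding cayley_f_def by (intro Rats_divide Rats_diff Rats_add) auto

lemma f_range: "0 < v \<Longrightarrow> v < 1 \<Longrightarrow> 0 < cayley_f v \<and> cayley_f v < 1"
  unfolding cayley_f_def by (auto simp: divide_simps)

lemma iter: assumes x: "0<x" "x<1" "x\<notin>\<rat>"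
  shows "0 < (oocf_T^^n) x \<and> (oocf_T^^n) x < 1 \<and> (oocf_T^^n) x \<notin> \<rat> \<and>
         (eicf_T^^n) (cayley_f x) = cayley_f ((oocf_T^^n) x)"
proof (induction n)
  case 0 thus ?case using x by simp
next
  case (Suc n)
  define z where "z = (oocf_T^^n) x"
  have z: "0 < z" "z < 1" "z \<notin> \<rat>" and e: "(eicf_T^^n) (cayley_f x) = cayley_f z" using Suc z_def by auto
  define v where "v = (if even (M z) then W z - real (M z) else real (M z) + 1 - W z)"
  note tv = T_val[OF z, folded v_def]
  have r: "0 < cayley_f v \<and> cayley_f v < 1" using f_range tv by simp
  have fv: "cayley_f (cayley_f v) = v" using ff tv(1) by simp
  have nq: "cayley_f v \<notin> \<rat>" using f_rat[of "cayley_f v"] fv tv(3) by auto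
  have "(oocf_T^^Suc n) x = cayley_f v" using tv z_def by simp
  moreover have "(eicf_T^^Suc n) (cayley_f x) = v" using tv e by simp
  ultimately show ?case using r nq fv by simp
qed

lemma oocf_digit_eq: assumes x: "0<x" "x<1" "x\<notin>\<rat>" and n: "n \<ge> 1"
  shows "oocf_digit x n = dig ((oocf_T^^(n-1)) x)"
proof -
  have z: "0 < (oocf_T^^(n-1)) x" "(oocf_T^^(n-1)) x < 1" "(oocf_T^^(n-1)) x \<notin> \<rat>"
    using iter[OF x, of "n-1"] by auto
  show ?thesis unfolding oocf_digit_def using digA[OF z] by simp
qed

lemma eicf_digit_eq: assumes x: "0<x" "x<1" "x\<notin>\<rat>" and n: "n \<ge> 1"
  shows "eicf_digit (cayley_f x) n = edig ((oocf_T^^(n-1)) x)"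
proof -
  have z: "0 < (oocf_T^^(n-1)) x" "(oocf_T^^(n-1)) x < 1" "(oocf_T^^(n-1)) x \<notin> \<rat>"
    and e: "(eicf_T^^(n-1)) (cayley_f x) = cayley_f ((oocf_T^^(n-1)) x)"
    using iter[OF x, of "n-1"] by auto
  show ?thesis unfolding eicf_digit_def e using digB[OF z] by simp
qed

lemma tail_step:
  assumes A: "A' \<ge> 1" and ae: "(a::nat) \<ge> 1" "e = 1 \<or> (e = -1 \<and> a \<ge> 2)"
  shows "real a + real_of_int e / (2 - 1 / A') \<ge> 1"
    "real (fst (digit_phi (a,e))) + real_of_int (snd (digit_phi (a,e))) / (2*A' - 1)
       = 2 * (real a + real_of_int e / (2 - 1 / A')) - 1"
proof -
  have A0: "A' \<noteq> 0" "2*A' - 1 > 0" using A by auto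
  have q: "1 / (2 - 1/A') = A' / (2*A'-1)" using A0 by (simp add: field_simps)
  have q1: "A' / (2*A'-1) \<le> 1" "A' / (2*A'-1) > 0" using A0 A by (auto simp: divide_simps)
  have q2: "e / (2 - 1/A') = e * (A' / (2*A'-1))" using q by (metis times_divide_eq_right mult.right_neutral)
  show "real a + real_of_int e / (2 - 1 / A') \<ge> 1"
    using ae q1 unfolding q2 by auto
  show "real (fst (digit_phi (a,e))) + real_of_int (snd (digit_phi (a,e))) / (2*A' - 1)
       = 2 * (real a + real_of_int e / (2 - 1 / A')) - 1"
    using ae
  proof (elim disjE conjE)
    assume e1: "e = 1"
    have "2 * (real a + 1 * (A' / (2*A'-1))) - 1 = 2 * real a + 1 / (2*A' - 1)"
      using A0 by (simp add: field_simps)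
    thus ?thesis unfolding q2 using e1 by (simp add: digit_phi_def)
  next
    assume e1: "e = -1" "a \<ge> 2"
    have "2 * (real a + (-1) * (A' / (2*A'-1))) - 1 = (2 * real a - 2) - 1 / (2*A' - 1)"
      using A0 by (simp add: field_simps)
    moreover have "real (2 * (a - 1)) = 2 * real a - 2" using e1 by (simp add: of_nat_diff)
    ultimately show ?thesis unfolding q2 using e1 by (simp add: digit_phi_def)
  qed
qed

lemma D_cases: "(a, e) \<in> oocf_D \<Longrightarrow> a \<ge> 1 \<and> (e = 1 \<or> (e = -1 \<and> a \<ge> 2))"
  unfolding oocf_D_def by auto

lemma tail: "ds \<noteq> [] \<Longrightarrow> set ds \<subseteq> oocf_D \<Longrightarrow>
   oocf_tail ds \<ge> 1 \<and> eicf_tail (map digit_phi ds) = 2 * oocf_tail ds - 1"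
proof (induction ds)
  case Nil thus ?case by simp
next
  case (Cons d ds)
  obtain a e where d: "d = (a, e)" by (cases d)
  have ae: "a \<ge> 1" "e = 1 \<or> (e = -1 \<and> a \<ge> 2)" using D_cases[of a e] Cons.prems d by auto
  show ?case
  proof (cases ds)
    case Nil
    show ?thesis using ae Nil d
      by (auto simp: digit_phi_def of_nat_diff)
  next
    case (Cons d' ds')
    have IH: "oocf_tail ds \<ge> 1" "eicf_tail (map digit_phi ds) = 2 * oocf_tail ds - 1"
      using Cons.IH Cons.prems Cons by auto
    note ts = tail_step[OF IH(1) ae]
    obtain b h where bh: "digit_phi (a,e) = (b,h)" by (cases "digit_phi (a,e)")
    have o: "oocf_tail (d # ds) = real a + real_of_int e / (2 - 1 / oocf_tail ds)"
      using d Cons by simp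
    have "eicf_tail (map digit_phi (d # ds)) = real b + real_of_int h / eicf_tail (map digit_phi ds)"
      using d Cons bh by simp
    thus ?thesis using o ts bh IH(2) by simp
  qed
qed



theorem mainTheorem13:
  fixes x :: real
  assumes "0 < x" and "x < 1" and "x \<notin> \<rat>"
  shows "\<forall>n\<ge>1. eicf_digit (cayley_f x) n = digit_phi (oocf_digit x n)
              \<and> eicf_conv (cayley_f x) n = cayley_f (oocf_conv x n)"
proof (intro allI impI)
  fix n :: nat assume n: "n \<ge> 1"
  note x = assms
  have dg: "\<And>i. i \<ge> 1 \<Longrightarrow> eicf_digit (cayley_f x) i = digit_phi (oocf_digit x i)"
    using oocf_digit_eq[OF x] eicf_digit_eq[OF x] phi_dig by simp
  have inD: "\<And>i. i \<ge> 1 \<Longrightarrow> oocf_digit x i \<in> oocf_D"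
  proof -
    fix i :: nat assume i: "i \<ge> 1"
    have z: "0 < (oocf_T^^(i-1)) x" "(oocf_T^^(i-1)) x < 1" "(oocf_T^^(i-1)) x \<notin> \<rat>"
      using iter[OF x, of "i-1"] by auto
    show "oocf_digit x i \<in> oocf_D" using oocf_digit_eq[OF x i] digA[OF z] by blast
  qed
  define ds where "ds = map (oocf_digit x) [1..<n + 1]"
  have ne: "ds \<noteq> []" using n unfolding ds_def by simp
  have sD: "set ds \<subseteq> oocf_D" unfolding ds_def using inD by auto
  have md: "map (eicf_digit (cayley_f x)) [1..<n + 1] = map digit_phi ds"
    unfolding ds_def map_map by (rule map_cong) (auto intro: dg)
  note t = tail[OF ne sD]
  define A where "A = oocf_tail ds"
  have A: "A \<ge> 1" using t A_def by simp
  have "eicf_conv (cayley_f x) n = 1 / (2*A - 1)"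
    unfolding eicf_conv_def md using t A_def by simp
  moreover have "cayley_f (oocf_conv x n) = 1 / (2*A - 1)"
  proof -
    have "oocf_conv x n = 1 - 1/A" unfolding oocf_conv_def A_def ds_def ..
    moreover have "cayley_f (1 - 1/A) = 1 / (2*A - 1)"
      unfolding cayley_f_def using A by (simp add: field_simps)
    ultimately show ?thesis by simp
  qed
  ultimately show "eicf_digit (cayley_f x) n = digit_phi (oocf_digit x n)
              \<and> eicf_conv (cayley_f x) n = cayley_f (oocf_conv x n)" using dg n by simp
qed


end
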